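(* Fix $c>0$. Let $\varepsilon\mapsto E_\star(\varepsilon,c)\in\mathcal{E}_1$ be a differentiable map on an open interval $I\subseteq(0,\infty)$. Assume that for every $\varepsilon\in I$: - $E_\star(\varepsilon,c)$ is a minimizer of $F_{\varepsilon,c}$ over $\mathcal{E}_1$; - $\lambda_k$ and $\lambda_{k+1}$ of $L(W+\varepsilon E_\star(\varepsilon,c))$ are simple; - $G_{\varepsilon,c}(E_\star(\varepsilon,c))$ is a negative real multiple of $E_\star(\varepsilon,c)$. Let $\varphi_c(\varepsilon)=F_{\varepsilon,c}(E_\star(\varepsilon,c))$. Then for $\varepsilon\in I$, \[ \varphi_c'(\varepsilon)=\langle G_{\varepsilon,c}(E_\star(\varepsilon,c)),E_\star(\varepsilon,c)\rangle=-\|G_{\varepsilon,c}(E_\star(\varepsilon,c))\|_F . \]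
   Context: Let $\mathscr{E}\subseteq\{1,\dots,n\}^2$ be a symmetric edge set, and let $W=(w_{ij})\in\mathbb{R}^{n\times n}$ be symmetric, entrywise non-negative, with $w_{ij}=0$ for $(i,j)\notin\mathscr{E}$. Let $L(A)=\mathrm{diag}(A\mathbb{1})-A$ with $\mathbb{1}=(1,\dots,1)^T$. Eigenvalues are ordered $\lambda_1\le\dots\le\lambda_n$. The inner product is $\langle X,Y\rangle=\mathrm{trace}(X^TY)$ and $\|\cdot\|_F$ is the Frobenius norm. Let $\mathcal{S}=\{A: a_{ij}=0\ \forall (i,j)\notin\mathscr{E}\}$, with orthogonal projection $\Pi_{\mathcal{S}}$ (zeroing the entries outside $\mathscr{E}$). Let $\mathcal{E}=\mathcal{S}\cap\mathrm{Sym}(\mathbb{R}^{n\times n})$ and $\mathcal{E}_1=\{E\in\mathcal{E}:\|E\|_F=1\}$. Fix $k\in\{2,\dots,n-1\}$. For $\varepsilon>0$ and $E=(e_{ij})\in\mathcal{E}$ with $\lambda_k,\lambda_{k+1}$ of $L(W+\varepsilon E)$ simple, define the following objects. - $x$ and $y$ are unit eigenvectors for $\lambda_{k+1}$ and $\lambda_k$ respectively. - $F_\varepsilon(E)=\lambda_{k+1}(L(W+\varepsilon E))-\lambda_k(L(W+\varepsilon E))$. - $z=x\bullet x-y\bullet y$, the componentwise product. - $R_\varepsilon(E)=\tfrac12(z\mathbb{1}^T+\mathbb{1}z^T)-xx^T+yy^T$. - $G_\varepsilon(E)=\Pi_{\mathcal{S}}R_\varepsilon(E)$. - $Q_\varepsilon(E)=\tfrac12\sum_{(i,j)\in\mathscr{E}}(w_{ij}+\varepsilon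 e_{ij})_-^2$, where $(a)_-=\min(a,0)$. - $F_{\varepsilon,c}(E)=F_\varepsilon(E)+cQ_\varepsilon(E)$. - $G_{\varepsilon,c}(E)=G_\varepsilon(E)+c(W+\varepsilon E)_-$, where $(\cdot)_-$ is taken entrywise. *)

theory Defs
  imports "HOL-Analysis.Analysis" "HOL-Computational_Algebra.Polynomial"
begin

text \<open>Matrices are real n x n matrices indexed by a finite type 'n (n = CARD('n)).
  The inner product on real^'n^'n is trace(X^T Y) and its norm is the Frobenius norm.\<close>

definition ones :: "real ^ 'n" where "ones = (\<chi> i. 1)"

definition lap :: "real ^ 'n ^ 'n \<Rightarrow> real ^ 'n ^ 'n" where
  "lap A = (\<chi> i j. if i = j then (\<Sum>l\<in>UNIV. A $ i $ l) else 0) - A"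

definition charpoly :: "real ^ 'n ^ 'n \<Rightarrow> real poly" where
  "charpoly A = det (\<chi> i j. (if i = j then [:0, 1:] else 0) - [: A $ i $ j :])"

text \<open>Eigenvalues listed with algebraic multiplicity in nondecreasing order;
  eig A j is lambda_j (1-based).\<close>
definition eig :: "real ^ 'n ^ 'n \<Rightarrow> nat \<Rightarrow> real" where
  "eig A j = sorted_list_of_multiset (proots (charpoly A)) ! (j - 1)"

definition simple_eig :: "real ^ 'n ^ 'n \<Rightarrow> nat \<Rightarrow> bool" where
  "simple_eig A j \<longleftrightarrow> count (proots (charpoly A)) (eig A j) = 1"

text \<open>A unit eigenvector for eigenvalue mu (chosen; the objects below do not depend on the sign).\<close>
definition unit_eigvec :: "real ^ 'n ^ 'n \<Rightarrow> real \<Rightarrow> real ^ 'n" where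
  "unit_eigvec A mu = (SOME v. norm v = 1 \<and> A *v v = mu *\<^sub>R v)"

definition symmat :: "real ^ 'n ^ 'n \<Rightarrow> bool" where
  "symmat A \<longleftrightarrow> transpose A = A"

definition projS :: "('n \<times> 'n) set \<Rightarrow> real ^ 'n ^ 'n \<Rightarrow> real ^ 'n ^ 'n" where
  "projS Ed A = (\<chi> i j. if (i, j) \<in> Ed then A $ i $ j else 0)"

definition patt :: "('n \<times> 'n) set \<Rightarrow> (real ^ 'n ^ 'n) set" where
  "patt Ed = {A. (\<forall>i j. (i, j) \<notin> Ed \<longrightarrow> A $ i $ j = 0) \<and> symmat A}"

definition patt1 :: "('n \<times> 'n) set \<Rightarrow> (real ^ 'n ^ 'n) set" where
  "patt1 Ed = {A \<in> patt Ed. norm A = 1}"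

definition Feps :: "real ^ 'n ^ 'n \<Rightarrow> nat \<Rightarrow> real \<Rightarrow> real ^ 'n ^ 'n \<Rightarrow> real" where
  "Feps W k eps E = eig (lap (W + eps *\<^sub>R E)) (k + 1) - eig (lap (W + eps *\<^sub>R E)) k"

definition Rmat :: "real ^ 'n ^ 'n \<Rightarrow> nat \<Rightarrow> real \<Rightarrow> real ^ 'n ^ 'n \<Rightarrow> real ^ 'n ^ 'n" where
  "Rmat W k eps E =
     (let M = lap (W + eps *\<^sub>R E);
          x = unit_eigvec M (eig M (k + 1));
          y = unit_eigvec M (eig M k);
          z = (\<chi> i. x $ i * x $ i - y $ i * y $ i)
      in (\<chi> i j. (z $ i * ones $ j + ones $ i * z $ j) / 2 - x $ i * x $ j + y $ i * y $ j))"

definition Geps :: "('n \<times> 'n) set \<Rightarrow> real ^ 'n ^ 'n \<Rightarrow> nat \<Rightarrow> real \<Rightarrow> real ^ 'n ^ 'n \<Rightarrow> real ^ 'n ^ 'n" where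
  "Geps Ed W k eps E = projS Ed (Rmat W k eps E)"

definition Qeps :: "('n \<times> 'n) set \<Rightarrow> real ^ 'n ^ 'n \<Rightarrow> real \<Rightarrow> real ^ 'n ^ 'n \<Rightarrow> real" where
  "Qeps Ed W eps E = (1/2) * (\<Sum>(i, j)\<in>Ed. (min (W $ i $ j + eps * E $ i $ j) 0) ^ 2)"

definition Fepsc :: "('n \<times> 'n) set \<Rightarrow> real ^ 'n ^ 'n \<Rightarrow> nat \<Rightarrow> real \<Rightarrow> real \<Rightarrow> real ^ 'n ^ 'n \<Rightarrow> real" where
  "Fepsc Ed W k eps c E = Feps W k eps E + c * Qeps Ed W eps E"

definition Gepsc :: "('n \<times> 'n) set \<Rightarrow> real ^ 'n ^ 'n \<Rightarrow> nat \<Rightarrow> real \<Rightarrow> real \<Rightarrow> real ^ 'n ^ 'n \<Rightarrow> real ^ 'n ^ 'n" where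
  "Gepsc Ed W k eps c E = Geps Ed W k eps E
      + c *\<^sub>R (\<chi> i j. min (W $ i $ j + eps * E $ i $ j) 0)"

end

theory Submission
  imports Defs
begin


lemma symmat_dot:
  fixes A :: "real^'n^'n"
  assumes "symmat A"
  shows "x \<bullet> (A *v y) = (A *v x) \<bullet> y"
by (metis dot_lmul_matrix transpose_matrix_vector assms symmat_def inner_commute)


lemma min_eigvec:
  fixes A :: "real^'n^'n"
  assumes sA: "symmat A" and sS: "subspace S" and ne: "x0 \<in> S" "x0 \<noteq> 0"
    and inv: "\<And>x. x \<in> S \<Longrightarrow> A *v x \<in> S"
  obtains v \<mu> where "v \<in> S" "norm v = 1" "A *v v = \<mu> *\<^sub>R v"
    "\<And>x. x \<in> S \<Longrightarrow> \<mu> * (x \<bullet> x) \<le> x \<bullet> (A *v x)"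
proof -
  define K where "K = S \<inter> sphere 0 1"
  have cK: "compact K" unfolding K_def
    by (simp add: closed_subspace sS closed_Int_compact compact_sphere)
  have neK: "K \<noteq> {}"
  proof -
    have "x0 /\<^sub>R norm x0 \<in> K" using ne sS unfolding K_def
      by (simp add: subspace_scale)
    then show ?thesis by blast
  qed
  have cf: "continuous_on K (\<lambda>x. x \<bullet> (A *v x))"
    by (rule continuous_on_inner[OF continuous_on_id matrix_vector_mult_linear_continuous_on])
  from continuous_attains_inf[OF cK neK cf] obtain v where vK: "v \<in> K" and vmin: "\<And>y. y \<in> K \<Longrightarrow> v \<bullet> (A *v v) \<le> y \<bullet> (A *v y)"
    by blast
  define \<mu> where "\<mu> = v \<bullet> (A *v v)"
  have vS: "v \<in> S" and nv: "norm v = 1" using vK by (auto simp: K_def)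
  have vv: "v \<bullet> v = 1" using nv by (simp add: dot_square_norm)
  have mn: "\<mu> * (x \<bullet> x) \<le> x \<bullet> (A *v x)" if xS: "x \<in> S" for x
  proof (cases "x = 0")
    case True then show ?thesis by simp
  next
    case False
    define y where "y = x /\<^sub>R norm x"
    have "y \<in> K" using xS False sS unfolding K_def y_def by (simp add: subspace_scale)
    then have "\<mu> \<le> y \<bullet> (A *v y)" using vmin \<mu>_def by blast
    also have "y \<bullet> (A *v y) = (x \<bullet> (A *v x)) / (norm x)^2"
      unfolding y_def by (simp add: matrix_vector_mult_scaleR power2_eq_square field_simps)
    finally have "\<mu> * (norm x)^2 \<le> x \<bullet> (A *v x)"
      using False by (simp add: field_simps)
    then show ?thesis by (simp add: power2_norm_eq_inner)
  qed
  define w where "w = A *v v - \<mu> *\<^sub>R v"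
  have wS: "w \<in> S" unfolding w_def using inv vS sS by (simp add: subspace_diff subspace_scale)
  have vw: "v \<bullet> w = 0" unfolding w_def \<mu>_def by (simp add: inner_diff_right vv)
  have wAv: "w \<bullet> (A *v v) = w \<bullet> w"
  proof -
    have "A *v v = w + \<mu> *\<^sub>R v" unfolding w_def by simp
    then show ?thesis using vw by (simp add: inner_add_right inner_commute)
  qed
  define C where "C = w \<bullet> (A *v w) - \<mu> * (w \<bullet> w)"
  have key: "0 \<le> 2 * s * (w \<bullet> w) + s^2 * C" for s
  proof -
    have "v + s *\<^sub>R w \<in> S" using vS wS sS by (simp add: subspace_add subspace_scale)
    then have h: "\<mu> * ((v + s *\<^sub>R w) \<bullet> (v + s *\<^sub>R w)) \<le> (v + s *\<^sub>R w) \<bullet> (A *v (v + s *\<^sub>R w))"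
      by (rule mn)
    have e1: "(v + s *\<^sub>R w) \<bullet> (v + s *\<^sub>R w) = 1 + s^2 * (w \<bullet> w)"
      using vv vw by (simp add: inner_add_left inner_add_right inner_commute power2_eq_square)
    have sym1: "v \<bullet> (A *v w) = w \<bullet> (A *v v)"
      using symmat_dot[OF sA, of v w] by (simp add: inner_commute)
    have e2: "(v + s *\<^sub>R w) \<bullet> (A *v (v + s *\<^sub>R w)) = \<mu> + 2 * s * (w \<bullet> w) + s^2 * (w \<bullet> (A *v w))"
      using sym1 wAv unfolding \<mu>_def
      by (simp add: matrix_vector_right_distrib matrix_vector_mult_scaleR inner_add_left inner_add_right power2_eq_square algebra_simps)
    show ?thesis using h unfolding e1 e2 C_def by (simp add: algebra_simps)
  qed
  have "w \<bullet> w = 0"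
  proof (rule ccontr)
    assume nz: "w \<bullet> w \<noteq> 0"
    then have pos: "w \<bullet> w > 0" by (simp add: order_le_neq_trans)
    show False
    proof (cases "C \<le> 0")
      case True
      from key[of "-1"] have "0 \<le> - 2 * (w \<bullet> w) + C" by simp
      then show False using True pos by linarith
    next
      case False
      define s where "s = - (w \<bullet> w) / C"
      from key[of s] have "0 \<le> 2 * s * (w \<bullet> w) + s^2 * C" .
      also have "\<dots> = - ((w \<bullet> w) * (w \<bullet> w) / C)" unfolding s_def using False
        by (simp add: field_simps power2_eq_square)
      finally have "0 \<le> - ((w \<bullet> w) * (w \<bullet> w) / C)" .
      moreover have "(w \<bullet> w) * (w \<bullet> w) / C > 0" using False pos by simp
      ultimately show False by linarith
    qed
  qed
  then have "A *v v = \<mu> *\<^sub>R v" unfolding w_def by simp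
  then show ?thesis using that vS nv mn by blast
qed



lemma spectral_partial:
  fixes A :: "real^'n^'n"
  assumes sA: "symmat A"
  shows "m \<le> CARD('n) \<Longrightarrow> \<exists>u a. (\<forall>i<m. norm (u i) = 1 \<and> A *v u i = a i *\<^sub>R u i)
     \<and> (\<forall>i<m. \<forall>l<m. i \<noteq> l \<longrightarrow> u i \<bullet> u l = 0)
     \<and> (\<forall>i l. i \<le> l \<longrightarrow> l < m \<longrightarrow> a i \<le> a l)
     \<and> (\<forall>i<m. \<forall>x. (\<forall>l<i. x \<bullet> u l = 0) \<longrightarrow> a i * (x \<bullet> x) \<le> x \<bullet> (A *v x))"
proof (induction m)
  case 0 show ?case by auto
next
  case (Suc m)
  then obtain u a where H1: "\<forall>i<m. norm (u i) = 1 \<and> A *v u i = a i *\<^sub>R u i"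
     and H2: "\<forall>i<m. \<forall>l<m. i \<noteq> l \<longrightarrow> u i \<bullet> u l = 0"
     and H3: "\<forall>i l. i \<le> l \<longrightarrow> l < m \<longrightarrow> a i \<le> a l"
     and H4: "\<forall>i<m. \<forall>x. (\<forall>l<i. x \<bullet> u l = 0) \<longrightarrow> a i * (x \<bullet> x) \<le> x \<bullet> (A *v x)"
    by auto
  define S where "S = {x. \<forall>l<m. x \<bullet> u l = 0}"
  have sS: "subspace S" unfolding S_def subspace_def by (auto simp: inner_add_left)
  have "dim (u ` {..<m}) \<le> card (u ` {..<m})" by (rule dim_le_card') simp
  also have "\<dots> \<le> m" using card_image_le[of "{..<m}" u] by simp
  also have "m < DIM(real^'n)" using Suc.prems by simp
  finally obtain x0 where x0: "x0 \<noteq> 0" "\<And>y. y \<in> span (u ` {..<m}) \<Longrightarrow> orthogonal x0 y"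
    using orthogonal_to_subspace_exists by blast
  have x0S: "x0 \<in> S" unfolding S_def using x0(2) by (auto simp: orthogonal_def span_base)
  have inv: "A *v x \<in> S" if "x \<in> S" for x
  proof -
    have "(A *v x) \<bullet> u l = 0" if "l < m" for l
    proof -
      have "(A *v x) \<bullet> u l = x \<bullet> (A *v u l)" using symmat_dot[OF sA, of x "u l"] by simp
      also have "\<dots> = a l * (x \<bullet> u l)" using H1 \<open>l<m\<close> by simp
      finally show ?thesis using \<open>x \<in> S\<close> \<open>l<m\<close> unfolding S_def by simp
    qed
    then show ?thesis unfolding S_def by simp
  qed
  obtain v \<mu> where vS: "v \<in> S" and nv: "norm v = 1" and ev: "A *v v = \<mu> *\<^sub>R v"
      and mn: "\<And>x. x \<in> S \<Longrightarrow> \<mu> * (x \<bullet> x) \<le> x \<bullet> (A *v x)"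
    using min_eigvec[OF sA sS x0S x0(1) inv] by blast
  have vv: "v \<bullet> v = 1" using nv by (simp add: dot_square_norm)
  have vu: "v \<bullet> u l = 0" if "l < m" for l using vS that unfolding S_def by simp
  have amu: "a i \<le> \<mu>" if "i < m" for i
  proof -
    have "a i * (v \<bullet> v) \<le> v \<bullet> (A *v v)" using H4 that vu by simp
    then show ?thesis using vv ev by simp
  qed
  define u' where "u' = u(m := v)"
  define a' where "a' = a(m := \<mu>)"
  have P1: "\<forall>i<Suc m. norm (u' i) = 1 \<and> A *v u' i = a' i *\<^sub>R u' i"
    using H1 nv ev unfolding u'_def a'_def by (auto simp: less_Suc_eq)
  have P2: "\<forall>i<Suc m. \<forall>l<Suc m. i \<noteq> l \<longrightarrow> u' i \<bullet> u' l = 0"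
    using H2 vu unfolding u'_def by (auto simp: less_Suc_eq inner_commute)
  have P3: "\<forall>i l. i \<le> l \<longrightarrow> l < Suc m \<longrightarrow> a' i \<le> a' l"
    using H3 amu unfolding a'_def by (auto simp: less_Suc_eq)
  have P4: "\<forall>i<Suc m. \<forall>x. (\<forall>l<i. x \<bullet> u' l = 0) \<longrightarrow> a' i * (x \<bullet> x) \<le> x \<bullet> (A *v x)"
  proof (intro allI impI)
    fix i x assume i: "i < Suc m" and hx: "\<forall>l<i. x \<bullet> u' l = 0"
    show "a' i * (x \<bullet> x) \<le> x \<bullet> (A *v x)"
    proof (cases "i = m")
      case True
      then have "x \<in> S" using hx unfolding S_def u'_def by auto
      then show ?thesis using mn True unfolding a'_def by simp
    next
      case False
      then have "i < m" using i by simp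
      moreover have "\<forall>l<i. x \<bullet> u l = 0" using hx \<open>i < m\<close> unfolding u'_def by auto
      ultimately show ?thesis using H4 False unfolding a'_def by simp
    qed
  qed
  show ?case using P1 P2 P3 P4 by blast
qed



definition sdec :: "real^'n^'n \<Rightarrow> (nat \<Rightarrow> real^'n) \<Rightarrow> (nat \<Rightarrow> real) \<Rightarrow> bool" where
  "sdec A u a \<longleftrightarrow> (\<forall>i<CARD('n). norm (u i) = 1 \<and> A *v u i = a i *\<^sub>R u i)
     \<and> (\<forall>i<CARD('n). \<forall>l<CARD('n). i \<noteq> l \<longrightarrow> u i \<bullet> u l = 0)
     \<and> (\<forall>i l. i \<le> l \<longrightarrow> l < CARD('n) \<longrightarrow> a i \<le> a l)"

lemma sdec_exists:
  fixes A :: "real^'n^'n"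
  assumes "symmat A" shows "\<exists>u a. sdec A u a"
proof -
  from spectral_partial[OF assms, of "CARD('n)"]
  obtain u a where h1: "\<forall>i<CARD('n). norm (u i) = 1 \<and> A *v u i = a i *\<^sub>R u i"
     and h2: "\<forall>i<CARD('n). \<forall>l<CARD('n). i \<noteq> l \<longrightarrow> u i \<bullet> u l = 0"
     and h3: "\<forall>i l. i \<le> l \<longrightarrow> l < CARD('n) \<longrightarrow> a i \<le> a l"
    by (auto simp del: One_nat_def)
  have "sdec A u a" unfolding sdec_def using h1 h2 h3 by (intro conjI)
  then show ?thesis by blast
qed

lemma poly_det: "poly (det P) x = det (\<chi> i j. poly (P $ i $ j) x)"
  unfolding det_def by (simp add: poly_sum poly_prod)

lemma sdec_Q:
  fixes A :: "real^'n^'n"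
  assumes sd: "sdec A u a"
  obtains \<tau> :: "'n \<Rightarrow> nat" where "bij_betw \<tau> UNIV {..<CARD('n)}"
    "transpose (\<chi> r c. u (\<tau> c) $ r) ** (\<chi> r c. u (\<tau> c) $ r) = mat 1"
proof -
  obtain \<sigma> :: "nat \<Rightarrow> 'n" where s: "bij_betw \<sigma> {0..<CARD('n)} UNIV"
    using ex_bij_betw_nat_finite[of "UNIV :: 'n set"] by auto
  define \<tau> where "\<tau> = inv_into {0..<CARD('n)} \<sigma>"
  have t: "bij_betw \<tau> UNIV {..<CARD('n)}" unfolding \<tau>_def
    using bij_betw_inv_into[OF s] by (simp add: atLeast0LessThan)
  have tl: "\<tau> c < CARD('n)" for c using t by (auto simp: bij_betw_def)
  have ti: "\<tau> c = \<tau> c' \<Longrightarrow> c = c'" for c c' using t by (auto simp: bij_betw_def inj_def)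
  have "(transpose (\<chi> r c. u (\<tau> c) $ r) ** (\<chi> r c. u (\<tau> c) $ r)) $ c $ c' = mat 1 $ c $ c'" for c c'
  proof -
    have "(transpose (\<chi> r c. u (\<tau> c) $ r) ** (\<chi> r c. u (\<tau> c) $ r)) $ c $ c' = u (\<tau> c) \<bullet> u (\<tau> c')"
      by (simp add: matrix_matrix_mult_def transpose_def inner_vec_def)
    also have "\<dots> = mat 1 $ c $ c'"
    proof (cases "c = c'")
      case True then show ?thesis using sd tl unfolding sdec_def
        by (simp add: mat_def dot_square_norm)
    next
      case False
      then have "\<tau> c \<noteq> \<tau> c'" using ti by blast
      then have "u (\<tau> c) \<bullet> u (\<tau> c') = 0" using sd tl unfolding sdec_def by blast
      then show ?thesis using False by (simp add: mat_def)
    qed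
    finally show ?thesis .
  qed
  then have "transpose (\<chi> r c. u (\<tau> c) $ r) ** (\<chi> r c. u (\<tau> c) $ r) = mat 1"
    by (simp add: vec_eq_iff)
  then show ?thesis using that t by blast
qed

lemma sdec_expand:
  fixes A :: "real^'n^'n"
  assumes sd: "sdec A u a"
  shows "x = (\<Sum>i<CARD('n). (x \<bullet> u i) *\<^sub>R u i)"
proof -
  obtain \<tau> :: "'n \<Rightarrow> nat" where t: "bij_betw \<tau> UNIV {..<CARD('n)}"
    and QQ: "transpose (\<chi> r c. u (\<tau> c) $ r) ** (\<chi> r c. u (\<tau> c) $ r) = mat 1"
    using sdec_Q[OF sd] by blast
  define Q where "Q = (\<chi> r c. u (\<tau> c) $ r)"
  have QQ': "Q ** transpose Q = mat 1" using QQ matrix_left_right_inverse unfolding Q_def by blast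
  have "x = Q *v (transpose Q *v x)" by (metis matrix_vector_mul_assoc QQ' matrix_vector_mul_lid)
  also have "\<dots> = (\<Sum>c\<in>UNIV. (x \<bullet> u (\<tau> c)) *\<^sub>R u (\<tau> c))"
    by (simp add: vec_eq_iff Q_def matrix_vector_mult_def transpose_def sum_component inner_vec_def mult.commute)
  also have "\<dots> = (\<Sum>i<CARD('n). (x \<bullet> u i) *\<^sub>R u i)"
    by (rule sum.reindex_bij_betw[OF t])
  finally show ?thesis .
qed

lemma sdec_det:
  fixes A :: "real^'n^'n"
  assumes sd: "sdec A u a"
  shows "det (s *\<^sub>R mat 1 - A) = (\<Prod>i<CARD('n). s - a i)"
proof -
  obtain \<tau> :: "'n \<Rightarrow> nat" where t: "bij_betw \<tau> UNIV {..<CARD('n)}"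
    and QQ: "transpose (\<chi> r c. u (\<tau> c) $ r) ** (\<chi> r c. u (\<tau> c) $ r) = mat 1"
    using sdec_Q[OF sd] by blast
  define Q where "Q = (\<chi> r c. u (\<tau> c) $ r)"
  have tl: "\<tau> c < CARD('n)" for c using t by (auto simp: bij_betw_def)
  have ti: "\<tau> c = \<tau> c' \<Longrightarrow> c = c'" for c c' using t by (auto simp: bij_betw_def inj_def)
  define B where "B = s *\<^sub>R mat 1 - A"
  have BQ: "B ** Q = (\<chi> k c'. (B *v u (\<tau> c')) $ k)"
    by (simp add: vec_eq_iff Q_def matrix_matrix_mult_def matrix_vector_mult_def)
  have gen: "(transpose Q ** (B ** Q)) $ c $ c' = u (\<tau> c) \<bullet> (B *v u (\<tau> c'))" for c c'
    unfolding BQ by (simp add: Q_def matrix_matrix_mult_def transpose_def inner_vec_def)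
  have Bu: "B *v u i = (s - a i) *\<^sub>R u i" if "i < CARD('n)" for i
  proof -
    have "A *v u i = a i *\<^sub>R u i" using sd that unfolding sdec_def by blast
    moreover have "(s *\<^sub>R mat 1) *v u i = s *\<^sub>R u i"
    proof -
      have "(\<Sum>j\<in>UNIV. s * (if ia = j then 1 else 0) * u i $ j) = s * u i $ ia" for ia
      proof -
        have "(\<Sum>j\<in>UNIV. s * (if ia = j then 1 else 0) * u i $ j) = (\<Sum>j\<in>UNIV. if ia = j then s * u i $ j else 0)"
          by (rule sum.cong) auto
        then show ?thesis by simp
      qed
      then show ?thesis by (simp add: vec_eq_iff matrix_vector_mult_def mat_def)
    qed
    ultimately show ?thesis unfolding B_def
      by (simp add: matrix_vector_mult_diff_rdistrib scaleR_diff_left)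
  qed
  have D: "(transpose Q ** (B ** Q)) $ c $ c' = (if c = c' then s - a (\<tau> c) else 0)" for c c'
  proof -
    have e: "(transpose Q ** (B ** Q)) $ c $ c' = (s - a (\<tau> c')) * (u (\<tau> c) \<bullet> u (\<tau> c'))"
      unfolding gen Bu[OF tl] by simp
    show ?thesis
    proof (cases "c = c'")
      case True
      have "norm (u (\<tau> c)) = 1" using sd tl unfolding sdec_def by blast
      then show ?thesis using True e by (simp add: dot_square_norm)
    next
      case False
      then have "\<tau> c \<noteq> \<tau> c'" using ti by blast
      then have "u (\<tau> c) \<bullet> u (\<tau> c') = 0" using sd tl unfolding sdec_def by blast
      then show ?thesis using False e by simp
    qed
  qed
  have "det (transpose Q ** (B ** Q)) = det B * (det Q * det Q)"
    by (simp add: det_mul)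
  also have "det Q * det Q = 1"
  proof -
    have "det (transpose Q ** Q) = 1" using QQ unfolding Q_def by simp
    then show ?thesis by (simp add: det_mul)
  qed
  finally have "det B = det (transpose Q ** (B ** Q))" by simp
  also have "\<dots> = (\<Prod>c\<in>UNIV. s - a (\<tau> c))"
    by (subst det_diagonal) (auto simp: D)
  also have "\<dots> = (\<Prod>i<CARD('n). s - a i)"
    by (rule prod.reindex_bij_betw[OF t])
  finally show ?thesis unfolding B_def .
qed

lemma sdec_charpoly:
  fixes A :: "real^'n^'n"
  assumes sd: "sdec A u a"
  shows "charpoly A = (\<Prod>i<CARD('n). [:- a i, 1:])"
proof -
  have "poly (charpoly A) s = poly (\<Prod>i<CARD('n). [:- a i, 1:]) s" for s
  proof -
    have "poly (charpoly A) s = det (s *\<^sub>R mat 1 - A)"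
      unfolding charpoly_def poly_det
      by (rule arg_cong[where f=det]) (simp add: vec_eq_iff mat_def)
    also have "\<dots> = (\<Prod>i<CARD('n). s - a i)" by (rule sdec_det[OF sd])
    finally show ?thesis by (simp add: poly_prod)
  qed
  then show ?thesis using poly_eq_poly_eq_iff by blast
qed

lemma sum_mset_upt: "(\<Sum>i<n. {#a i#}) = mset (map a [0..<n])"
  by (induction n) auto

lemma sdec_proots:
  fixes A :: "real^'n^'n"
  assumes sd: "sdec A u a"
  shows "proots (charpoly A) = mset (map a [0..<CARD('n)])"
proof -
  have "proots (charpoly A) = (\<Sum>i<CARD('n). proots [:- a i, 1:])"
    unfolding sdec_charpoly[OF sd] by (rule proots_prod) auto
  also have "\<dots> = (\<Sum>i<CARD('n). {#a i#})" by simp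
  finally show ?thesis by (simp add: sum_mset_upt)
qed

lemma sdec_eig:
  fixes A :: "real^'n^'n"
  assumes sd: "sdec A u a" and j: "1 \<le> j" "j \<le> CARD('n)"
  shows "eig A j = a (j - 1)"
proof -
  have m: "\<forall>i l. i \<le> l \<longrightarrow> l < CARD('n) \<longrightarrow> a i \<le> a l"
    using sd unfolding sdec_def by (rule conjunct2[THEN conjunct2])
  have "sorted (map a [0..<CARD('n)])" unfolding sorted_iff_nth_mono using m by simp
  then have "sorted_list_of_multiset (mset (map a [0..<CARD('n)])) = map a [0..<CARD('n)]"
    by (simp only: sorted_list_of_multiset_mset sorted_sort_id)
  then show ?thesis unfolding eig_def sdec_proots[OF sd] using j by simp
qed

lemma sdec_simple:
  fixes A :: "real^'n^'n"
  assumes sd: "sdec A u a" and j: "1 \<le> j" "j \<le> CARD('n)" and se: "simple_eig A j"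
    and i: "i < CARD('n)" "i \<noteq> j - 1"
  shows "a i \<noteq> a (j - 1)"
proof
  assume eq: "a i = a (j - 1)"
  have "count (proots (charpoly A)) (a (j - 1)) = 1" using se sdec_eig[OF sd j] unfolding simple_eig_def by simp
  then have "card {i. i < CARD('n) \<and> a (j - 1) = map a [0..<CARD('n)] ! i} = 1"
    unfolding sdec_proots[OF sd] count_mset count_list_eq_length_filter length_filter_conv_card by simp
  moreover have "{i. i < CARD('n) \<and> a (j - 1) = map a [0..<CARD('n)] ! i} = {l. l < CARD('n) \<and> a (j - 1) = a l}"
    by auto
  ultimately have "card {l. l < CARD('n) \<and> a (j - 1) = a l} = 1" by simp
  moreover have "{i, j - 1} \<subseteq> {l. l < CARD('n) \<and> a (j - 1) = a l}" using eq i j by simp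
  moreover have "finite {l. l < CARD('n) \<and> a (j - 1) = a l}" by simp
  ultimately have "card {i, j - 1} \<le> 1" using card_mono by metis
  then show False using i by simp
qed



lemma sdec_sq:
  fixes A :: "real^'n^'n"
  assumes sd: "sdec A u a"
  shows "x \<bullet> x = (\<Sum>i<CARD('n). (x \<bullet> u i)^2)"
proof -
  have "x \<bullet> x = x \<bullet> (\<Sum>i<CARD('n). (x \<bullet> u i) *\<^sub>R u i)"
    using sdec_expand[OF sd, of x] by simp
  also have "\<dots> = (\<Sum>i<CARD('n). (x \<bullet> u i)^2)"
    by (simp add: inner_sum_right power2_eq_square)
  finally show ?thesis .
qed

lemma sdec_quad:
  fixes A :: "real^'n^'n"
  assumes sA: "symmat A" and sd: "sdec A u a"
  shows "x \<bullet> (A *v x) = (\<Sum>i<CARD('n). a i * (x \<bullet> u i)^2)"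
proof -
  have "x \<bullet> (A *v x) = (A *v x) \<bullet> x" by (simp add: inner_commute)
  also have "\<dots> = (A *v x) \<bullet> (\<Sum>i<CARD('n). (x \<bullet> u i) *\<^sub>R u i)"
    using sdec_expand[OF sd, of x] by simp
  also have "\<dots> = (\<Sum>i<CARD('n). (x \<bullet> u i) * ((A *v x) \<bullet> u i))"
    by (simp add: inner_sum_right)
  also have "\<dots> = (\<Sum>i<CARD('n). a i * (x \<bullet> u i)^2)"
  proof (rule sum.cong)
    fix i assume "i \<in> {..<CARD('n)}"
    then have "A *v u i = a i *\<^sub>R u i" using sd unfolding sdec_def by simp
    moreover have "(A *v x) \<bullet> u i = x \<bullet> (A *v u i)" using symmat_dot[OF sA, of x "u i"] by simp
    ultimately show "(x \<bullet> u i) * ((A *v x) \<bullet> u i) = a i * (x \<bullet> u i)^2"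
      by (simp add: power2_eq_square)
  qed simp
  finally show ?thesis .
qed

definition mnorm :: "real^'n^'n \<Rightarrow> real" where
  "mnorm D = (\<Sum>i\<in>UNIV. \<Sum>j\<in>UNIV. \<bar>D $ i $ j\<bar>)"

lemma mnorm_norm: "norm (D *v x) \<le> mnorm D * norm x"
proof -
  have "norm (D *v x) \<le> onorm ((*v) D) * norm x"
    by (rule onorm) simp
  also have "\<dots> \<le> mnorm D * norm x"
    unfolding mnorm_def by (rule mult_right_mono[OF onorm_le_matrix_component_sum]) simp
  finally show ?thesis .
qed

lemma mnorm_quad: "\<bar>x \<bullet> (D *v x)\<bar> \<le> mnorm D * (x \<bullet> x)"
proof -
  have "\<bar>x \<bullet> (D *v x)\<bar> \<le> norm x * norm (D *v x)" by (rule Cauchy_Schwarz_ineq2)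
  also have "\<dots> \<le> norm x * (mnorm D * norm x)" by (rule mult_left_mono[OF mnorm_norm]) simp
  also have "\<dots> = mnorm D * (x \<bullet> x)" by (simp add: dot_square_norm power2_eq_square)
  finally show ?thesis .
qed

lemma mnorm_commute: "mnorm (A - B) = mnorm (B - A)"
  unfolding mnorm_def by (simp add: abs_minus_commute)

lemma weyl_half:
  fixes A B :: "real^'n^'n"
  assumes sA: "symmat A" and sB: "symmat B" and sdA: "sdec A u a" and sdB: "sdec B w b"
    and J: "J < CARD('n)"
  shows "b J \<le> a J + mnorm (B - A)"
proof -
  define S where "S = u ` {Suc J..<CARD('n)} \<union> w ` {..<J}"
  have c1: "card (u ` {Suc J..<CARD('n)}) \<le> CARD('n) - Suc J"
    using card_image_le[of "{Suc J..<CARD('n)}" u] by simp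
  have c2: "card (w ` {..<J}) \<le> J" using card_image_le[of "{..<J}" w] by simp
  have fS: "finite S" unfolding S_def by simp
  have "dim S \<le> card S" by (rule dim_le_card'[OF fS])
  also have "card S \<le> card (u ` {Suc J..<CARD('n)}) + card (w ` {..<J})"
    unfolding S_def by (rule card_Un_le)
  also have "\<dots> < DIM(real^'n)" using c1 c2 J by simp
  finally obtain v where v0: "v \<noteq> 0" and vo: "\<And>y. y \<in> span S \<Longrightarrow> orthogonal v y"
    using orthogonal_to_subspace_exists by blast
  have vu: "v \<bullet> u i = 0" if "J < i" "i < CARD('n)" for i
    using vo[of "u i"] that unfolding S_def by (auto simp: orthogonal_def span_base)
  have vw: "v \<bullet> w l = 0" if "l < J" for l
    using vo[of "w l"] that unfolding S_def by (auto simp: orthogonal_def span_base)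
  have am: "a i \<le> a J" if "i \<le> J" for i using sdA that J unfolding sdec_def by simp
  have bm: "b J \<le> b l" if "J \<le> l" "l < CARD('n)" for l using sdB that unfolding sdec_def by simp
  have qa: "v \<bullet> (A *v v) \<le> a J * (v \<bullet> v)"
  proof -
    have "v \<bullet> (A *v v) = (\<Sum>i<CARD('n). a i * (v \<bullet> u i)^2)" by (rule sdec_quad[OF sA sdA])
    also have "\<dots> \<le> (\<Sum>i<CARD('n). a J * (v \<bullet> u i)^2)"
    proof (rule sum_mono)
      fix i assume i: "i \<in> {..<CARD('n)}"
      show "a i * (v \<bullet> u i)^2 \<le> a J * (v \<bullet> u i)^2"
      proof (cases "i \<le> J")
        case True then show ?thesis using am by (simp add: mult_right_mono)
      next
        case False then show ?thesis using vu i by simp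
      qed
    qed
    also have "\<dots> = a J * (v \<bullet> v)" using sdec_sq[OF sdA, of v] by (simp add: sum_distrib_left)
    finally show ?thesis .
  qed
  have qb: "b J * (v \<bullet> v) \<le> v \<bullet> (B *v v)"
  proof -
    have "b J * (v \<bullet> v) = (\<Sum>l<CARD('n). b J * (v \<bullet> w l)^2)" using sdec_sq[OF sdB, of v] by (simp add: sum_distrib_left)
    also have "\<dots> \<le> (\<Sum>l<CARD('n). b l * (v \<bullet> w l)^2)"
    proof (rule sum_mono)
      fix l assume l: "l \<in> {..<CARD('n)}"
      show "b J * (v \<bullet> w l)^2 \<le> b l * (v \<bullet> w l)^2"
      proof (cases "J \<le> l")
        case True then show ?thesis using bm l by (simp add: mult_right_mono)
      next
        case False then show ?thesis using vw by simp
      qed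
    qed
    also have "\<dots> = v \<bullet> (B *v v)" by (rule sdec_quad[OF sB sdB, symmetric])
    finally show ?thesis .
  qed
  have "v \<bullet> (B *v v) - v \<bullet> (A *v v) = v \<bullet> ((B - A) *v v)"
    by (simp add: matrix_vector_mult_diff_rdistrib inner_diff_right)
  also have "\<dots> \<le> mnorm (B - A) * (v \<bullet> v)" using mnorm_quad[of v "B - A"] by simp
  finally have "b J * (v \<bullet> v) \<le> (a J + mnorm (B - A)) * (v \<bullet> v)" using qa qb by (simp add: algebra_simps)
  moreover have "v \<bullet> v > 0" using v0 by simp
  ultimately show ?thesis by simp
qed

lemma weyl:
  fixes A B :: "real^'n^'n"
  assumes sA: "symmat A" and sB: "symmat B" and j: "1 \<le> j" "j \<le> CARD('n)"
  shows "\<bar>eig B j - eig A j\<bar> \<le> mnorm (B - A)"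
proof -
  obtain u a where sdA: "sdec A u a" using sdec_exists[OF sA] by blast
  obtain w b where sdB: "sdec B w b" using sdec_exists[OF sB] by blast
  have J: "j - 1 < CARD('n)" using j by simp
  have "b (j - 1) \<le> a (j - 1) + mnorm (B - A)" by (rule weyl_half[OF sA sB sdA sdB J])
  moreover have "a (j - 1) \<le> b (j - 1) + mnorm (A - B)" by (rule weyl_half[OF sB sA sdB sdA J])
  ultimately show ?thesis using sdec_eig[OF sdA j] sdec_eig[OF sdB j] mnorm_commute[of A B] by simp
qed



lemma unit_eigvec_works:
  assumes "norm v = 1" "A *v v = \<mu> *\<^sub>R v"
  shows "norm (unit_eigvec A \<mu>) = 1 \<and> A *v unit_eigvec A \<mu> = \<mu> *\<^sub>R unit_eigvec A \<mu>"
  unfolding unit_eigvec_def by (rule someI[where P="\<lambda>v. norm v = 1 \<and> A *v v = \<mu> *\<^sub>R v"]) (use assms in blast)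

lemma eig_is_eigval:
  fixes A :: "real^'n^'n"
  assumes sA: "symmat A" and j: "1 \<le> j" "j \<le> CARD('n)"
  shows "norm (unit_eigvec A (eig A j)) = 1 \<and> A *v unit_eigvec A (eig A j) = eig A j *\<^sub>R unit_eigvec A (eig A j)"
proof -
  obtain u a where sd: "sdec A u a" using sdec_exists[OF sA] by blast
  have "j - 1 < CARD('n)" using j by simp
  then have "norm (u (j - 1)) = 1" "A *v u (j - 1) = a (j - 1) *\<^sub>R u (j - 1)"
    using sd unfolding sdec_def by auto
  then show ?thesis unfolding sdec_eig[OF sd j] by (rule unit_eigvec_works)
qed

lemma sum_single:
  assumes "finite S" "J \<in> S" "\<And>i. i \<in> S \<Longrightarrow> i \<noteq> J \<Longrightarrow> f i = 0"
  shows "sum f S = f J"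
proof -
  have "sum f S = f J + sum f (S - {J})" using assms by (simp add: sum.remove)
  also have "sum f (S - {J}) = 0" using assms by (intro sum.neutral) auto
  finally show ?thesis by simp
qed

lemma gap_ineq:
  fixes A :: "real^'n^'n"
  assumes sA: "symmat A" and sd: "sdec A u a" and J: "J < CARD('n)"
    and dist: "\<And>i. i < CARD('n) \<Longrightarrow> i \<noteq> J \<Longrightarrow> a i \<noteq> a J"
    and g: "\<And>i. i < CARD('n) \<Longrightarrow> i \<noteq> J \<Longrightarrow> g \<le> \<bar>a i - a J\<bar>" and g0: "0 \<le> g"
    and x0: "norm x0 = 1" "A *v x0 = a J *\<^sub>R x0"
  shows "g^2 * (y \<bullet> y - (y \<bullet> x0)^2) \<le> (norm (A *v y - a J *\<^sub>R y))^2"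
proof -
  define c where "c i = y \<bullet> u i" for i
  have zu: "(A *v z - a J *\<^sub>R z) \<bullet> u i = (a i - a J) * (z \<bullet> u i)" if "i < CARD('n)" for i z
  proof -
    have "(A *v z) \<bullet> u i = z \<bullet> (A *v u i)" using symmat_dot[OF sA, of z "u i"] by simp
    also have "\<dots> = a i * (z \<bullet> u i)" using sd that unfolding sdec_def by simp
    finally show ?thesis by (simp add: inner_diff_left algebra_simps)
  qed
  have x0u: "x0 \<bullet> u i = 0" if "i < CARD('n)" "i \<noteq> J" for i
  proof -
    have "(a i - a J) * (x0 \<bullet> u i) = 0" using zu[OF that(1), of x0] x0(2) by simp
    then show ?thesis using dist[OF that] by simp
  qed
  have yx0: "y \<bullet> x0 = (x0 \<bullet> u J) * c J"
  proof -
    have "y \<bullet> x0 = y \<bullet> (\<Sum>i<CARD('n). (x0 \<bullet> u i) *\<^sub>R u i)" using sdec_expand[OF sd, of x0] by simp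
    also have "\<dots> = (\<Sum>i<CARD('n). (x0 \<bullet> u i) * c i)" by (simp add: inner_sum_right c_def)
    also have "\<dots> = (x0 \<bullet> u J) * c J" by (rule sum_single) (use J x0u in auto)
    finally show ?thesis .
  qed
  have x0J: "(x0 \<bullet> u J)^2 = 1"
  proof -
    have "1 = x0 \<bullet> x0" using x0(1) by (simp add: dot_square_norm)
    also have "\<dots> = (\<Sum>i<CARD('n). (x0 \<bullet> u i)^2)" by (rule sdec_sq[OF sd])
    also have "\<dots> = (x0 \<bullet> u J)^2" by (rule sum_single) (use J x0u in auto)
    finally show ?thesis by simp
  qed
  have yx0': "(y \<bullet> x0)^2 = (c J)^2" unfolding yx0 power_mult_distrib x0J by simp
  define z where "z = A *v y - a J *\<^sub>R y"
  have "(norm z)^2 = z \<bullet> z" by (simp add: dot_square_norm)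
  also have "\<dots> = (\<Sum>i<CARD('n). (z \<bullet> u i)^2)" by (rule sdec_sq[OF sd])
  also have "\<dots> = (\<Sum>i<CARD('n). (a i - a J)^2 * (c i)^2)"
    by (rule sum.cong) (simp_all add: z_def zu c_def power_mult_distrib)
  also have "\<dots> \<ge> (\<Sum>i<CARD('n). g^2 * (c i)^2 - (if i = J then g^2 * (c i)^2 else 0))"
  proof (rule sum_mono)
    fix i assume i: "i \<in> {..<CARD('n)}"
    show "g^2 * (c i)^2 - (if i = J then g^2 * (c i)^2 else 0) \<le> (a i - a J)^2 * (c i)^2"
    proof (cases "i = J")
      case True then show ?thesis by simp
    next
      case False
      then have "g \<le> \<bar>a i - a J\<bar>" using g i by simp
      then have "g^2 \<le> \<bar>a i - a J\<bar>^2" using g0 by (rule power_mono)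
      then have "g^2 \<le> (a i - a J)^2" by simp
      then show ?thesis using False by (simp add: mult_right_mono)
    qed
  qed
  also have "(\<Sum>i<CARD('n). g^2 * (c i)^2 - (if i = J then g^2 * (c i)^2 else 0))
      = g^2 * (\<Sum>i<CARD('n). (c i)^2) - g^2 * (c J)^2"
    using J by (simp add: sum_subtractf sum_distrib_left)
  also have "(\<Sum>i<CARD('n). (c i)^2) = y \<bullet> y" unfolding c_def by (rule sdec_sq[OF sd, symmetric])
  finally show ?thesis unfolding z_def yx0' by (simp add: algebra_simps)
qed


lemma mnorm_nonneg: "0 \<le> mnorm D"
  unfolding mnorm_def by (intro sum_nonneg) simp

lemma eig_deriv:
  fixes M :: "real \<Rightarrow> real^'n^'n"
  assumes dM: "(M has_vector_derivative M') (at t0)"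
    and sM: "eventually (\<lambda>t. symmat (M t)) (nhds t0)"
    and j: "1 \<le> j" "j \<le> CARD('n)" and se: "simple_eig (M t0) j"
  shows "((\<lambda>t. eig (M t) j) has_real_derivative
     (unit_eigvec (M t0) (eig (M t0) j) \<bullet> (M' *v unit_eigvec (M t0) (eig (M t0) j)))) (at t0)"
proof -
  define x0 where "x0 = unit_eigvec (M t0) (eig (M t0) j)"
  define A0 where "A0 = M t0"
  have sA0: "symmat A0" using sM unfolding A0_def by (rule eventually_nhds_x_imp_x)
  obtain u a where sd: "sdec A0 u a" using sdec_exists[OF sA0] by blast
  define J where "J = j - 1"
  have J: "J < CARD('n)" using j J_def by simp
  define l0 where "l0 = eig A0 j"
  have l0: "l0 = a J" using sdec_eig[OF sd j] by (simp add: J_def l0_def)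
  have x0: "norm x0 = 1" "A0 *v x0 = l0 *\<^sub>R x0"
    using eig_is_eigval[OF sA0 j] unfolding x0_def A0_def l0_def by auto
  have se': "simple_eig A0 j" using se unfolding A0_def .
  have dist: "a i \<noteq> a J" if "i < CARD('n)" "i \<noteq> J" for i
    using sdec_simple[OF sd j se' that(1)] that(2) unfolding J_def by simp
  define g where "g = Min (insert 1 ((\<lambda>i. \<bar>a i - a J\<bar>) ` {i. i < CARD('n) \<and> i \<noteq> J}))"
  have gpos: "0 < g" unfolding g_def using dist by (subst Min_gr_iff) auto
  have gle: "g \<le> \<bar>a i - a J\<bar>" if "i < CARD('n)" "i \<noteq> J" for i
    unfolding g_def using that by (intro Min_le) auto
  have gap: "g^2 * (y \<bullet> y - (y \<bullet> x0)^2) \<le> (norm (A0 *v y - l0 *\<^sub>R y))^2" for y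
    unfolding l0 by (rule gap_ineq[OF sA0 sd J dist gle _ x0[unfolded l0]]) (use gpos in auto)
  have ev_sym: "eventually (\<lambda>t. symmat (M t)) (at t0)"
    using sM unfolding eventually_at_filter by (rule eventually_mono) simp
  have ev_ne: "eventually (\<lambda>t. t \<noteq> t0) (at t0)"
    unfolding eventually_at_filter by simp
  define K where "K t = mnorm (M t - A0)" for t
  have Mlim: "(M \<longlongrightarrow> A0) (at t0)"
    using has_vector_derivative_continuous[OF dM] unfolding continuous_at A0_def .
  have Klim: "(K \<longlongrightarrow> 0) (at t0)"
  proof -
    have "((\<lambda>t. M t - A0) \<longlongrightarrow> 0) (at t0)" using Mlim by (rule LIM_zero)
    then have "((\<lambda>t. \<Sum>i\<in>UNIV. \<Sum>j\<in>UNIV. \<bar>(M t - A0) $ i $ j\<bar>) \<longlongrightarrow>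
        (\<Sum>i\<in>UNIV. \<Sum>j\<in>UNIV. \<bar>(0::real^'n^'n) $ i $ j\<bar>)) (at t0)"
      by (intro tendsto_intros)
    then show ?thesis unfolding K_def mnorm_def by simp
  qed
  define lt where "lt t = eig (M t) j" for t
  define yt where "yt t = unit_eigvec (M t) (lt t)" for t
  define xs where "xs t = (if yt t \<bullet> x0 \<ge> 0 then yt t else - yt t)" for t
  define c where "c t = xs t \<bullet> x0" for t
  have ev1: "eventually (\<lambda>t. norm (xs t) = 1 \<and> M t *v xs t = lt t *\<^sub>R xs t \<and> 0 \<le> c t
       \<and> \<bar>lt t - l0\<bar> \<le> K t) (at t0)"
    using ev_sym
  proof (rule eventually_mono)
    fix t assume st: "symmat (M t)"
    have yy: "norm (yt t) = 1" "M t *v yt t = lt t *\<^sub>R yt t"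
      using eig_is_eigval[OF st j] unfolding yt_def lt_def by auto
    have neg: "M t *v (- yt t) = lt t *\<^sub>R (- yt t)"
      using yy(2) by (metis matrix_vector_mult_scaleR scaleR_minus1_left scaleR_minus_right)
    have "norm (xs t) = 1 \<and> M t *v xs t = lt t *\<^sub>R xs t \<and> 0 \<le> c t"
      unfolding xs_def c_def using yy neg by auto
    moreover have "\<bar>lt t - l0\<bar> \<le> K t"
      unfolding lt_def l0_def K_def A0_def by (rule weyl[OF sA0[unfolded A0_def] st j])
    ultimately show "norm (xs t) = 1 \<and> M t *v xs t = lt t *\<^sub>R xs t \<and> 0 \<le> c t \<and> \<bar>lt t - l0\<bar> \<le> K t"
      by blast
  qed
  have ev2: "eventually (\<lambda>t. 1 - c t \<le> 4 * (K t)^2 / g^2 \<and> c t \<le> 1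
      \<and> (norm (xs t - x0))^2 = 2 - 2 * c t) (at t0)"
    using ev1
  proof (rule eventually_mono)
    fix t assume h: "norm (xs t) = 1 \<and> M t *v xs t = lt t *\<^sub>R xs t \<and> 0 \<le> c t \<and> \<bar>lt t - l0\<bar> \<le> K t"
    define v where "v = xs t"
    have nv: "norm v = 1" and ev: "M t *v v = lt t *\<^sub>R v" and c0: "0 \<le> c t"
      and lK: "\<bar>lt t - l0\<bar> \<le> K t" using h unfolding v_def by auto
    have cv: "c t = v \<bullet> x0" unfolding c_def v_def ..
    have "A0 *v v - l0 *\<^sub>R v = (A0 - M t) *v v + (lt t - l0) *\<^sub>R v"
      using ev by (simp add: matrix_vector_mult_diff_rdistrib scaleR_diff_left)
    then have "norm (A0 *v v - l0 *\<^sub>R v) \<le> norm ((A0 - M t) *v v) + norm ((lt t - l0) *\<^sub>R v)"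
      using norm_triangle_ineq[of "(A0 - M t) *v v" "(lt t - l0) *\<^sub>R v"] by (simp only:)
    also have "norm ((A0 - M t) *v v) \<le> mnorm (A0 - M t) * norm v" by (rule mnorm_norm)
    also have "mnorm (A0 - M t) = K t" unfolding K_def by (rule mnorm_commute)
    also have "norm ((lt t - l0) *\<^sub>R v) = \<bar>lt t - l0\<bar>" using nv by simp
    finally have nb: "norm (A0 *v v - l0 *\<^sub>R v) \<le> 2 * K t" using nv lK by simp
    have c1: "c t \<le> 1"
    proof -
      have "\<bar>v \<bullet> x0\<bar> \<le> norm v * norm x0" by (rule Cauchy_Schwarz_ineq2)
      then show ?thesis using nv x0(1) cv by simp
    qed
    have "g^2 * (1 - (c t)^2) \<le> (norm (A0 *v v - l0 *\<^sub>R v))^2"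
      using gap[of v] nv cv by (simp add: dot_square_norm)
    also have "\<dots> \<le> (2 * K t)^2" using nb by (intro power_mono) simp_all
    finally have i1: "g^2 * (1 - (c t)^2) \<le> 4 * (K t)^2" by (simp add: power_mult_distrib)
    have "1 - c t \<le> 1 - (c t)^2" using c0 c1 mult_left_mono[of "c t" 1 "c t"] by (simp add: power2_eq_square)
    then have "g^2 * (1 - c t) \<le> g^2 * (1 - (c t)^2)" by (intro mult_left_mono) simp_all
    with i1 have "g^2 * (1 - c t) \<le> 4 * (K t)^2" by linarith
    then have "1 - c t \<le> 4 * (K t)^2 / g^2" using gpos by (simp add: pos_le_divide_eq mult.commute)
    moreover have "(norm (xs t - x0))^2 = 2 - 2 * c t"
    proof -
      have "(norm (v - x0))^2 = v \<bullet> v + x0 \<bullet> x0 - 2 * (v \<bullet> x0)"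
        by (simp add: dot_square_norm[symmetric] inner_diff_left inner_diff_right inner_commute)
      then show ?thesis using nv x0(1) cv unfolding v_def by (simp add: dot_square_norm)
    qed
    ultimately show "1 - c t \<le> 4 * (K t)^2 / g^2 \<and> c t \<le> 1 \<and> (norm (xs t - x0))^2 = 2 - 2 * c t"
      using c1 by blast
  qed
  have clim: "(c \<longlongrightarrow> 1) (at t0)"
  proof -
    have "((\<lambda>t. 4 * (K t)^2 / g^2) \<longlongrightarrow> 4 * 0^2 / g^2) (at t0)"
      by (intro tendsto_intros Klim) (use gpos in simp)
    then have l: "((\<lambda>t. 4 * (K t)^2 / g^2) \<longlongrightarrow> 0) (at t0)" by simp
    have "eventually (\<lambda>t. norm (c t - 1) \<le> 4 * (K t)^2 / g^2) (at t0)"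
      using ev2 by (rule eventually_mono) auto
    from Lim_null_comparison[OF this l] show ?thesis by (rule LIM_zero_cancel)
  qed
  have xslim: "(xs \<longlongrightarrow> x0) (at t0)"
  proof -
    have "((\<lambda>t. 3 * K t / g) \<longlongrightarrow> 3 * 0 / g) (at t0)"
      by (intro tendsto_intros Klim) (use gpos in simp)
    then have l: "((\<lambda>t. 3 * K t / g) \<longlongrightarrow> 0) (at t0)" by simp
    have "eventually (\<lambda>t. norm (xs t - x0) \<le> 3 * K t / g) (at t0)"
      using ev2
    proof (rule eventually_mono)
      fix t assume h: "1 - c t \<le> 4 * (K t)^2 / g^2 \<and> c t \<le> 1 \<and> (norm (xs t - x0))^2 = 2 - 2 * c t"
      have "(norm (xs t - x0))^2 \<le> 8 * (K t)^2 / g^2" using h by simp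
      also have "\<dots> \<le> (3 * K t / g)^2" by (simp add: power_divide power_mult_distrib divide_right_mono)
      finally have "(norm (xs t - x0))^2 \<le> (3 * K t / g)^2" .
      moreover have "0 \<le> 3 * K t / g" using gpos mnorm_nonneg[of "M t - A0"] unfolding K_def by simp
      ultimately show "norm (xs t - x0) \<le> 3 * K t / g" by (rule power2_le_imp_le)
    qed
    from Lim_null_comparison[OF this l] show ?thesis by (rule LIM_zero_cancel)
  qed
  have Dlim: "((\<lambda>t. (M t - A0) /\<^sub>R (t - t0)) \<longlongrightarrow> M') (at t0)"
  proof -
    have "(M has_derivative (\<lambda>h. h *\<^sub>R M')) (at t0)" using dM unfolding has_vector_derivative_def .
    then have l: "((\<lambda>y. ((M y - M t0) - (y - t0) *\<^sub>R M') /\<^sub>R norm (y - t0)) \<longlongrightarrow> 0) (at t0)"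
      unfolding has_derivative_at_within by blast
    have "eventually (\<lambda>t. norm ((M t - A0) /\<^sub>R (t - t0) - M')
        \<le> norm (((M t - M t0) - (t - t0) *\<^sub>R M') /\<^sub>R norm (t - t0))) (at t0)"
      using ev_ne
    proof (rule eventually_mono)
      fix t :: real assume ne: "t \<noteq> t0"
      have "(M t - A0) /\<^sub>R (t - t0) - M' = ((M t - M t0) - (t - t0) *\<^sub>R M') /\<^sub>R (t - t0)"
        using ne by (simp add: A0_def scaleR_diff_right)
      then show "norm ((M t - A0) /\<^sub>R (t - t0) - M')
        \<le> norm (((M t - M t0) - (t - t0) *\<^sub>R M') /\<^sub>R norm (t - t0))"
        by (simp add: divide_simps)
    qed
    from Lim_null_comparison[OF this tendsto_norm_zero[OF l]] show ?thesis by (rule LIM_zero_cancel)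
  qed
  have qlim: "((\<lambda>t. x0 \<bullet> (((M t - A0) /\<^sub>R (t - t0)) *v xs t)) \<longlongrightarrow> x0 \<bullet> (M' *v x0)) (at t0)"
  proof -
    have "((\<lambda>t. \<Sum>i\<in>UNIV. x0 $ i * (\<Sum>k\<in>UNIV. ((M t - A0) /\<^sub>R (t - t0)) $ i $ k * xs t $ k))
       \<longlongrightarrow> (\<Sum>i\<in>UNIV. x0 $ i * (\<Sum>k\<in>UNIV. M' $ i $ k * x0 $ k))) (at t0)"
      by (intro tendsto_intros Dlim xslim)
    then show ?thesis by (simp add: inner_vec_def matrix_vector_mult_def)
  qed
  have ev3: "eventually (\<lambda>t. (lt t - lt t0) / (t - t0)
        = x0 \<bullet> (((M t - A0) /\<^sub>R (t - t0)) *v xs t) / c t) (at t0)"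
    using ev1 ev_ne order_tendstoD(1)[OF clim zero_less_one]
  proof (eventually_elim)
    case (elim t)
    then have nv: "norm (xs t) = 1" and ev: "M t *v xs t = lt t *\<^sub>R xs t"
      and ne: "t \<noteq> t0" and cp: "0 < c t" by auto
    have "x0 \<bullet> (M t *v xs t) = lt t * c t" using ev unfolding c_def by (simp add: inner_commute)
    moreover have "x0 \<bullet> (A0 *v xs t) = l0 * c t"
      using symmat_dot[OF sA0, of x0 "xs t"] x0(2) unfolding c_def by (simp add: inner_commute)
    ultimately have id: "x0 \<bullet> ((M t - A0) *v xs t) = (lt t - l0) * c t"
      by (simp add: matrix_vector_mult_diff_rdistrib inner_diff_right algebra_simps)
    have "x0 \<bullet> (((M t - A0) /\<^sub>R (t - t0)) *v xs t) = x0 \<bullet> ((M t - A0) *v xs t) / (t - t0)"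
      by (simp add: scaleR_matrix_vector_assoc[symmetric] divide_inverse mult.commute)
    also have "\<dots> = (lt t - l0) * c t / (t - t0)" unfolding id ..
    finally show ?case using cp ne unfolding lt_def l0_def A0_def by (simp add: field_simps)
  qed
  have "((\<lambda>t. x0 \<bullet> (((M t - A0) /\<^sub>R (t - t0)) *v xs t) / c t) \<longlongrightarrow> x0 \<bullet> (M' *v x0) / 1) (at t0)"
    by (intro tendsto_divide qlim clim) simp
  then have "((\<lambda>t. (lt t - lt t0) / (t - t0)) \<longlongrightarrow> x0 \<bullet> (M' *v x0)) (at t0)"
    using ev3 by (simp add: Lim_transform_eventually[OF _ eventually_mono[OF ev3]] tendsto_cong)
  then show ?thesis unfolding has_field_derivative_iff lt_def x0_def .
qed



lemma lap_add: "lap (A + B) = lap A + lap B"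
  unfolding lap_def by (simp add: vec_eq_iff sum.distrib)

lemma lap_scaleR: "lap (c *\<^sub>R A) = c *\<^sub>R lap A"
  unfolding lap_def by (simp add: vec_eq_iff sum_distrib_left algebra_simps)

lemma bounded_linear_lap: "bounded_linear (lap :: real^'n^'n \<Rightarrow> real^'n^'n)"
proof -
  have "linear (lap :: real^'n^'n \<Rightarrow> real^'n^'n)"
    by (rule linearI) (simp_all add: lap_add lap_scaleR)
  then show ?thesis using linear_conv_bounded_linear by blast
qed

lemma symmat_entry: "symmat A \<Longrightarrow> A $ i $ j = A $ j $ i"
  unfolding symmat_def by (metis transpose_def vec_lambda_beta)

lemma symmatI: "(\<And>i j. A $ i $ j = A $ j $ i) \<Longrightarrow> symmat A"
  unfolding symmat_def transpose_def by (simp add: vec_eq_iff)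

lemma symmat_lap: "symmat A \<Longrightarrow> symmat (lap A)"
  by (rule symmatI) (simp add: lap_def symmat_entry)

lemma lap_quad:
  fixes B :: "real^'n^'n"
  assumes sB: "symmat B"
  shows "x \<bullet> (lap B *v x) = (\<Sum>i\<in>UNIV. \<Sum>j\<in>UNIV. ((x$i * x$i + x$j * x$j) / 2 - x$i * x$j) * B$i$j)"
proof -
  have mv: "(lap B *v x) $ i = (\<Sum>j\<in>UNIV. B$i$j) * x$i - (\<Sum>j\<in>UNIV. B$i$j * x$j)" for i
  proof -
    have "(lap B *v x) $ i = (\<Sum>j\<in>UNIV. (if i = j then (\<Sum>l\<in>UNIV. B$i$l) else 0) * x$j - B$i$j * x$j)"
      by (simp add: lap_def matrix_vector_mult_def algebra_simps)
    also have "\<dots> = (\<Sum>j\<in>UNIV. (if i = j then (\<Sum>l\<in>UNIV. B$i$l) else 0) * x$j) - (\<Sum>j\<in>UNIV. B$i$j * x$j)"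
      by (rule sum_subtractf)
    also have "(\<Sum>j\<in>UNIV. (if i = j then (\<Sum>l\<in>UNIV. B$i$l) else 0) * x$j) = (\<Sum>j\<in>UNIV. B$i$j) * x$i"
      by (simp add: if_distrib[of "\<lambda>t. t * _"] cong: if_cong)
    finally show ?thesis .
  qed
  have sw: "(\<Sum>i\<in>UNIV. \<Sum>j\<in>UNIV. x$j * x$j * B$i$j) = (\<Sum>i\<in>UNIV. \<Sum>j\<in>UNIV. x$i * x$i * B$i$j)"
  proof -
    have "(\<Sum>i\<in>UNIV. \<Sum>j\<in>UNIV. x$j * x$j * B$i$j) = (\<Sum>j\<in>UNIV. \<Sum>i\<in>UNIV. x$j * x$j * B$i$j)"
      by (rule sum.swap)
    also have "\<dots> = (\<Sum>j\<in>UNIV. \<Sum>i\<in>UNIV. x$j * x$j * B$j$i)"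
      using symmat_entry[OF sB] by simp
    finally show ?thesis .
  qed
  have "x \<bullet> (lap B *v x) = (\<Sum>i\<in>UNIV. x$i * ((\<Sum>j\<in>UNIV. B$i$j) * x$i - (\<Sum>j\<in>UNIV. B$i$j * x$j)))"
    by (simp add: inner_vec_def mv)
  also have "\<dots> = (\<Sum>i\<in>UNIV. \<Sum>j\<in>UNIV. x$i * x$i * B$i$j) - (\<Sum>i\<in>UNIV. \<Sum>j\<in>UNIV. x$i * x$j * B$i$j)"
    by (simp add: right_diff_distrib sum_subtractf sum_distrib_left algebra_simps)
  also have "\<dots> = (\<Sum>i\<in>UNIV. \<Sum>j\<in>UNIV. x$i * x$i * B$i$j) / 2 + (\<Sum>i\<in>UNIV. \<Sum>j\<in>UNIV. x$j * x$j * B$i$j) / 2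
      - (\<Sum>i\<in>UNIV. \<Sum>j\<in>UNIV. x$i * x$j * B$i$j)"
    unfolding sw by simp
  also have "\<dots> = (\<Sum>i\<in>UNIV. \<Sum>j\<in>UNIV. ((x$i * x$i + x$j * x$j) / 2 - x$i * x$j) * B$i$j)"
    by (simp add: sum_subtractf sum.distrib sum_divide_distrib algebra_simps add_divide_distrib)
  finally show ?thesis .
qed

definition Rxy :: "real^'n \<Rightarrow> real^'n \<Rightarrow> real^'n^'n" where
  "Rxy x y = (let z = (\<chi> i. x $ i * x $ i - y $ i * y $ i)
      in (\<chi> i j. (z $ i * ones $ j + ones $ i * z $ j) / 2 - x $ i * x $ j + y $ i * y $ j))"

lemma Rmat_Rxy: "Rmat W k eps E = Rxy (unit_eigvec (lap (W + eps *\<^sub>R E)) (eig (lap (W + eps *\<^sub>R E)) (k + 1)))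
   (unit_eigvec (lap (W + eps *\<^sub>R E)) (eig (lap (W + eps *\<^sub>R E)) k))"
  unfolding Rmat_def Rxy_def Let_def ..

lemma inner_mat: "inner (X :: real^'n^'n) Y = (\<Sum>i\<in>UNIV. \<Sum>j\<in>UNIV. X$i$j * Y$i$j)"
  by (simp add: inner_vec_def)

lemma Rxy_inner:
  fixes B :: "real^'n^'n"
  assumes sB: "symmat B"
  shows "inner (Rxy x y) B = x \<bullet> (lap B *v x) - y \<bullet> (lap B *v y)"
  unfolding lap_quad[OF sB] inner_mat Rxy_def Let_def ones_def
  by (simp add: sum_subtractf[symmetric] algebra_simps add_divide_distrib diff_divide_distrib)

lemma projS_inner:
  assumes "\<And>i j. (i, j) \<notin> Ed \<Longrightarrow> B $ i $ j = 0"
  shows "inner (projS Ed R) B = inner R B"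
  unfolding inner_mat projS_def using assms by (intro sum.cong refl) auto

lemma ev_zero_deriv:
  assumes "(f has_real_derivative D) (at t0)" "eventually (\<lambda>t. f t = 0) (nhds t0)"
  shows "D = 0"
proof -
  have "((\<lambda>t. 0) has_real_derivative D) (at t0)"
    using assms(1) DERIV_cong_ev[OF refl assms(2) refl] by simp
  then show ?thesis using DERIV_const DERIV_unique by blast
qed

lemma comp_deriv:
  fixes E :: "real \<Rightarrow> real^'n^'m"
  assumes "(E has_vector_derivative E') (at t0)"
  shows "((\<lambda>t. E t $ i $ j) has_real_derivative E' $ i $ j) (at t0)"
proof -
  have bl: "bounded_linear (\<lambda>X :: real^'n^'m. X $ i $ j)"
    by (rule bounded_linear_compose[OF bounded_linear_vec_nth bounded_linear_vec_nth])
  show ?thesis using bounded_linear.has_vector_derivative[OF bl assms]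
    unfolding has_real_derivative_iff_has_vector_derivative .
qed

lemma min_sq_deriv: "((\<lambda>s. (min s 0)^2) has_real_derivative (2 * min x (0::real))) (at x)"
proof (cases "x < 0")
  case True
  have "eventually (\<lambda>s. s \<in> {..<0}) (nhds x)" by (rule eventually_nhds_in_open) (use True in auto)
  then have ev: "eventually (\<lambda>s. (min s 0)^2 = s^2) (nhds x)" by (rule eventually_mono) simp
  have "((\<lambda>s. s^2) has_real_derivative (2 * x)) (at x)"
    using DERIV_pow[of 2 x] by simp
  then show ?thesis using DERIV_cong_ev[OF refl ev refl] True by simp
next
  case False
  show ?thesis
  proof (cases "x > 0")
    case True
    have "eventually (\<lambda>s. s \<in> {0<..}) (nhds x)" by (rule eventually_nhds_in_open) (use True in auto)
    then have ev: "eventually (\<lambda>s. (min s 0)^2 = 0) (nhds x)" by (rule eventually_mono) simp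
    have "((\<lambda>s. 0) has_real_derivative 0) (at x)" by simp
    then show ?thesis using DERIV_cong_ev[OF refl ev refl] True by simp
  next
    case False
    then have x: "x = 0" using \<open>\<not> x < 0\<close> by simp
    have lim: "((\<lambda>y. min y (0::real)) \<longlongrightarrow> min 0 0) (at 0)"
      by (intro tendsto_intros)
    have ev: "eventually (\<lambda>y. min y (0::real) = ((min y 0)^2 - (min 0 0)^2) / (y - 0)) (at 0)"
      unfolding eventually_at_filter
    proof (rule always_eventually, intro allI impI)
      fix y :: real assume "y \<noteq> 0"
      then show "min y 0 = ((min y 0)^2 - (min 0 0)^2) / (y - 0)"
        by (cases "y < 0") (auto simp: power2_eq_square)
    qed
    have "((\<lambda>y. ((min y 0)^2 - (min 0 0)^2) / (y - 0)) \<longlongrightarrow> (0::real)) (at 0)"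
      using Lim_transform_eventually[OF lim ev] by simp
    then show ?thesis unfolding x has_field_derivative_iff by simp
  qed
qed



lemma sum_Ed:
  fixes f :: "'n::finite \<Rightarrow> 'n \<Rightarrow> real"
  assumes "\<And>i j. (i, j) \<notin> Ed \<Longrightarrow> f i j = 0"
  shows "(\<Sum>i\<in>UNIV. \<Sum>j\<in>UNIV. f i j) = (\<Sum>(i, j)\<in>Ed. f i j)"
proof -
  have "(\<Sum>i\<in>UNIV. \<Sum>j\<in>UNIV. f i j) = (\<Sum>(i, j)\<in>UNIV \<times> UNIV. f i j)"
    by (rule sum.cartesian_product)
  also have "\<dots> = (\<Sum>(i, j)\<in>Ed. f i j)"
    by (rule sum.mono_neutral_right) (use assms in auto)
  finally show ?thesis .
qed

theorem lemma5p2: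
  fixes Ed :: "('n::finite \<times> 'n) set"
    and W :: "real ^ 'n ^ 'n"
    and k :: nat and c :: real
    and Es :: "real \<Rightarrow> real ^ 'n ^ 'n"
    and I :: "real set"
  assumes Ed_sym: "sym Ed"
    and W_sym: "symmat W"
    and W_nonneg: "\<forall>i j. 0 \<le> W $ i $ j"
    and W_patt: "\<forall>i j. (i, j) \<notin> Ed \<longrightarrow> W $ i $ j = 0"
    and k_lo: "2 \<le> k" and k_hi: "k \<le> CARD('n) - 1"
    and c_pos: "c > 0"
    and I_open: "open I" and I_int: "is_interval I" and I_pos: "I \<subseteq> {0<..}"
    and Es_diff: "Es differentiable_on I"
    and Es_in: "\<forall>eps\<in>I. Es eps \<in> patt1 Ed"
    and Es_min: "\<forall>eps\<in>I. \<forall>E\<in>patt1 Ed. Fepsc Ed W k eps c (Es eps) \<le> Fepsc Ed W k eps c E"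
    and Es_simple: "\<forall>eps\<in>I. simple_eig (lap (W + eps *\<^sub>R Es eps)) k
                          \<and> simple_eig (lap (W + eps *\<^sub>R Es eps)) (k + 1)"
    and Es_neg: "\<forall>eps\<in>I. \<exists>mu<0. Gepsc Ed W k eps c (Es eps) = mu *\<^sub>R Es eps"
  shows "\<forall>eps\<in>I.
           ((\<lambda>t. Fepsc Ed W k t c (Es t)) has_real_derivative
               inner (Gepsc Ed W k eps c (Es eps)) (Es eps)) (at eps)
         \<and> inner (Gepsc Ed W k eps c (Es eps)) (Es eps) = - norm (Gepsc Ed W k eps c (Es eps))"
proof (intro ballI)
  fix eps assume eI: "eps \<in> I"
  define E0 where "E0 = Es eps"
  define E' where "E' = vector_derivative Es (at eps)"
  have evI: "eventually (\<lambda>t. t \<in> I) (nhds eps)" by (rule eventually_nhds_in_open[OF I_open eI])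
  have Esd: "(Es has_vector_derivative E') (at eps)"
  proof -
    have "Es differentiable (at eps within I)" using Es_diff eI unfolding differentiable_on_def by blast
    then have "Es differentiable (at eps)" using at_within_open[OF eI I_open] by simp
    then show ?thesis unfolding E'_def using vector_derivative_works by blast
  qed
  have pat: "symmat (Es t) \<and> (\<forall>i j. (i, j) \<notin> Ed \<longrightarrow> Es t $ i $ j = 0) \<and> norm (Es t) = 1" if "t \<in> I" for t
    using Es_in that unfolding patt1_def patt_def by auto
  have E'sym: "E' $ i $ j = E' $ j $ i" for i j
  proof -
    have "((\<lambda>t. Es t $ i $ j - Es t $ j $ i) has_real_derivative E' $ i $ j - E' $ j $ i) (at eps)"
      by (intro DERIV_diff comp_deriv Esd)
    moreover have "eventually (\<lambda>t. Es t $ i $ j - Es t $ j $ i = 0) (nhds eps)"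
      using evI
    proof (rule eventually_mono)
      fix t assume "t \<in> I"
      then have "symmat (Es t)" using pat by blast
      then show "Es t $ i $ j - Es t $ j $ i = 0" using symmat_entry[of "Es t" i j] by simp
    qed
    ultimately have "E' $ i $ j - E' $ j $ i = 0" by (rule ev_zero_deriv)
    then show ?thesis by simp
  qed
  have E'pat: "E' $ i $ j = 0" if "(i, j) \<notin> Ed" for i j
  proof -
    have "((\<lambda>t. Es t $ i $ j) has_real_derivative E' $ i $ j) (at eps)"
      by (intro comp_deriv Esd)
    moreover have "eventually (\<lambda>t. Es t $ i $ j = 0) (nhds eps)"
      using evI by (rule eventually_mono) (use pat that in auto)
    ultimately show ?thesis by (rule ev_zero_deriv)
  qed
  have E'orth: "inner E0 E' = 0"
  proof -
    have "((\<lambda>t. (\<Sum>i\<in>UNIV. \<Sum>j\<in>UNIV. Es t $ i $ j * Es t $ i $ j) - 1) has_real_derivative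
        (\<Sum>i\<in>UNIV. \<Sum>j\<in>UNIV. E' $ i $ j * Es eps $ i $ j + E' $ i $ j * Es eps $ i $ j) - 0) (at eps)"
      by (intro DERIV_diff DERIV_sum DERIV_mult comp_deriv Esd DERIV_const)
    moreover have "eventually (\<lambda>t. (\<Sum>i\<in>UNIV. \<Sum>j\<in>UNIV. Es t $ i $ j * Es t $ i $ j) - 1 = 0) (nhds eps)"
      using evI
    proof (rule eventually_mono)
      fix t assume "t \<in> I"
      then have "norm (Es t) = 1" using pat by blast
      then have "inner (Es t) (Es t) = 1" by (simp add: dot_square_norm)
      then show "(\<Sum>i\<in>UNIV. \<Sum>j\<in>UNIV. Es t $ i $ j * Es t $ i $ j) - 1 = 0" unfolding inner_mat by simp
    qed
    ultimately have "(\<Sum>i\<in>UNIV. \<Sum>j\<in>UNIV. E' $ i $ j * Es eps $ i $ j + E' $ i $ j * Es eps $ i $ j) - 0 = 0"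
      by (rule ev_zero_deriv)
    then have "2 * (\<Sum>i\<in>UNIV. \<Sum>j\<in>UNIV. Es eps $ i $ j * E' $ i $ j) = 0"
      by (simp add: sum_distrib_left algebra_simps)
    then show ?thesis unfolding inner_mat E0_def by simp
  qed
  define B where "B = E0 + eps *\<^sub>R E'"
  have symB: "symmat B" unfolding B_def E0_def
    by (rule symmatI) (use pat[OF eI] symmat_entry E'sym in auto)
  have patB: "B $ i $ j = 0" if "(i, j) \<notin> Ed" for i j
    unfolding B_def E0_def using pat[OF eI] E'pat that by simp
  define M where "M t = lap (W + t *\<^sub>R Es t)" for t
  have Md: "(M has_vector_derivative lap B) (at eps)"
  proof -
    have "((\<lambda>t. W + t *\<^sub>R Es t) has_vector_derivative 0 + (eps *\<^sub>R E' + 1 *\<^sub>R Es eps)) (at eps)"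
      by (intro has_vector_derivative_add has_vector_derivative_const has_vector_derivative_scaleR DERIV_ident Esd)
    then have "((\<lambda>t. W + t *\<^sub>R Es t) has_vector_derivative B) (at eps)"
      unfolding B_def E0_def by (simp add: add.commute)
    from bounded_linear.has_vector_derivative[OF bounded_linear_lap this] show ?thesis
      unfolding M_def .
  qed
  have Msym: "eventually (\<lambda>t. symmat (M t)) (nhds eps)"
    using evI
  proof (rule eventually_mono)
    fix t assume "t \<in> I"
    then have "symmat (Es t)" using pat by blast
    then have "symmat (W + t *\<^sub>R Es t)"
      by (intro symmatI) (simp add: symmat_entry[OF W_sym] symmat_entry)
    then show "symmat (M t)" unfolding M_def by (rule symmat_lap)
  qed
  have kr: "1 \<le> k" "k \<le> CARD('n)" "1 \<le> k + 1" "k + 1 \<le> CARD('n)" using k_lo k_hi by auto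
  have se: "simple_eig (M eps) k" "simple_eig (M eps) (k + 1)" using Es_simple eI unfolding M_def by auto
  define x where "x = unit_eigvec (M eps) (eig (M eps) (k + 1))"
  define y where "y = unit_eigvec (M eps) (eig (M eps) k)"
  have d1: "((\<lambda>t. eig (M t) (k + 1)) has_real_derivative x \<bullet> (lap B *v x)) (at eps)"
    unfolding x_def by (rule eig_deriv[OF Md Msym kr(3,4) se(2)])
  have d2: "((\<lambda>t. eig (M t) k) has_real_derivative y \<bullet> (lap B *v y)) (at eps)"
    unfolding y_def by (rule eig_deriv[OF Md Msym kr(1,2) se(1)])
  define P where "P = (\<chi> i j. min (W $ i $ j + eps * E0 $ i $ j) 0)"
  have dQ: "((\<lambda>t. Qeps Ed W t (Es t)) has_real_derivative
      (1/2) * (\<Sum>p\<in>Ed. 2 * P $ fst p $ snd p * B $ fst p $ snd p)) (at eps)"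
    unfolding Qeps_def
  proof (intro DERIV_cmult DERIV_sum)
    fix p assume "p \<in> Ed"
    obtain i j where p: "p = (i, j)" by force
    have h: "((\<lambda>t. W $ i $ j + t * Es t $ i $ j) has_real_derivative B $ i $ j) (at eps)"
    proof -
      have "((\<lambda>t. W $ i $ j + t * Es t $ i $ j) has_real_derivative 0 + (1 * Es eps $ i $ j + E' $ i $ j * eps)) (at eps)"
        by (intro DERIV_add DERIV_const DERIV_mult DERIV_ident comp_deriv Esd)
      then show ?thesis unfolding B_def E0_def by (simp add: mult.commute)
    qed
    have "((\<lambda>t. (min (W $ i $ j + t * Es t $ i $ j) 0)^2) has_real_derivative
        (2 * min (W $ i $ j + eps * Es eps $ i $ j) 0) * B $ i $ j) (at eps)"
      by (rule DERIV_chain2[OF min_sq_deriv h])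
    then show "((\<lambda>t. case p of (i, j) \<Rightarrow> (min (W $ i $ j + t * Es t $ i $ j) 0)^2) has_real_derivative
        2 * P $ fst p $ snd p * B $ fst p $ snd p) (at eps)"
      unfolding p P_def E0_def by simp
  qed
  have dF: "((\<lambda>t. Fepsc Ed W k t c (Es t)) has_real_derivative
      (x \<bullet> (lap B *v x) - y \<bullet> (lap B *v y)) + c * ((1/2) * (\<Sum>p\<in>Ed. 2 * P $ fst p $ snd p * B $ fst p $ snd p))) (at eps)"
    unfolding Fepsc_def Feps_def
    using DERIV_add[OF DERIV_diff[OF d1 d2] DERIV_cmult[OF dQ, of c]] unfolding M_def .
  define G where "G = Gepsc Ed W k eps c (Es eps)"
  have val: "(x \<bullet> (lap B *v x) - y \<bullet> (lap B *v y)) + c * ((1/2) * (\<Sum>p\<in>Ed. 2 * P $ fst p $ snd p * B $ fst p $ snd p))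
      = inner G B"
  proof -
    have "inner (Geps Ed W k eps (Es eps)) B = x \<bullet> (lap B *v x) - y \<bullet> (lap B *v y)"
    proof -
      have "inner (Geps Ed W k eps (Es eps)) B = inner (Rmat W k eps (Es eps)) B"
        unfolding Geps_def by (rule projS_inner) (rule patB)
      also have "\<dots> = x \<bullet> (lap B *v x) - y \<bullet> (lap B *v y)"
        unfolding Rmat_Rxy Rxy_inner[OF symB] x_def y_def M_def ..
      finally show ?thesis .
    qed
    moreover have "inner (c *\<^sub>R P) B = c * ((1/2) * (\<Sum>p\<in>Ed. 2 * P $ fst p $ snd p * B $ fst p $ snd p))"
    proof -
      have "inner (c *\<^sub>R P) B = c * (\<Sum>i\<in>UNIV. \<Sum>j\<in>UNIV. P $ i $ j * B $ i $ j)"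
        unfolding inner_mat by (simp add: sum_distrib_left mult.assoc)
      also have "(\<Sum>i\<in>UNIV. \<Sum>j\<in>UNIV. P $ i $ j * B $ i $ j) = (\<Sum>(i, j)\<in>Ed. P $ i $ j * B $ i $ j)"
        by (rule sum_Ed) (simp add: patB)
      also have "\<dots> = (1/2) * (\<Sum>p\<in>Ed. 2 * P $ fst p $ snd p * B $ fst p $ snd p)"
        by (simp add: sum_distrib_left case_prod_beta mult.assoc)
      finally show ?thesis .
    qed
    moreover have "G = Geps Ed W k eps (Es eps) + c *\<^sub>R P"
      unfolding G_def Gepsc_def P_def E0_def ..
    ultimately show ?thesis by (simp add: inner_add_left del: inner_scaleR_left)
  qed
  obtain mu where mu: "mu < 0" "G = mu *\<^sub>R E0" using Es_neg eI unfolding G_def E0_def by blast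
  have nE0: "norm E0 = 1" using pat[OF eI] unfolding E0_def by blast
  have "inner G B = inner G E0"
    unfolding B_def using E'orth mu(2) by (simp add: inner_add_right)
  with dF val have "((\<lambda>t. Fepsc Ed W k t c (Es t)) has_real_derivative inner G E0) (at eps)" by simp
  moreover have "inner G E0 = - norm G"
  proof -
    have "inner E0 E0 = 1" using nE0 by (simp add: dot_square_norm)
    then show ?thesis using mu nE0 by simp
  qed
  ultimately show "((\<lambda>t. Fepsc Ed W k t c (Es t)) has_real_derivative
               inner (Gepsc Ed W k eps c (Es eps)) (Es eps)) (at eps)
         \<and> inner (Gepsc Ed W k eps c (Es eps)) (Es eps) = - norm (Gepsc Ed W k eps c (Es eps))"
    unfolding G_def E0_def by blast
qed

end
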